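(* Let $S$ be a semigroup that satisfies the identity $xyx \approx yx^2$, and suppose that for every identity $\mathbf{u}\approx\mathbf{v}$ satisfied by $S$: (i) $\mathrm{occ}(x,\mathbf{u})=\mathrm{occ}(x,\mathbf{v})$ for every letter $x\in\mathcal{X}$; (ii) $\mathrm{fp}(\mathbf{u})=\mathrm{fp}(\mathbf{v})$. Then $\{xyx \approx yx^2\}$ is an identity basis for $S$; in particular, $S$ is finitely based.
   Context: $\mathcal{X}$ is a countably infinite alphabet of letters; words are elements of the free monoid over $\mathcal{X}$. For a word $\mathbf{w}$ and a letter $x$, $\mathrm{occ}(x,\mathbf{w})$ is the number of occurrences of $x$ in $\mathbf{w}$. The final part $\mathrm{fp}(\mathbf{w})$ is the word obtained from $\mathbf{w}$ by retaining only the last occurrence of each letter. An identity is a formal expression $\mathbf{u}\approx\mathbf{v}$ with $\mathbf{u},\mathbf{v}$ words; a semigroup $S$ satisfies it if $\varphi(\mathbf{u})=\varphi(\mathbf{v})$ for every map $\varphi:\mathcal{X}\to S$ (extended homomorphically). An identity $\mathbf{u}\approx\mathbf{v}$ is derived from a set $\Sigma$ of identities if there is a sequence of words $\mathbf{u}=\mathbf{u}_1,\dots,\mathbf{u}_n=\mathbf{v}$ such that for each $i$, $\mathbf{u}_i=\mathbf{a}_i\varphi_i(\mathbf{p}_i)\mathbf{b}_i$ and $\mathbf{u}_{i+1}=\mathbf{a}_i\varphi_i(\mathbf{q}_i)\mathbf{b}_i$ for some words $\mathbf{a}_i,\mathbf{b}_i$, some endomorphism $\varphi_i$ of the free semigroup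 $\mathcal{X}^+$, and some identity $\mathbf{p}_i\approx\mathbf{q}_i$ in $\Sigma$. An identity basis for $S$ is a set $\Sigma$ of identities satisfied by $S$ such that every identity satisfied by $S$ is derived from $\Sigma$; $S$ is finitely based if it has a finite identity basis. *)

theory Defs
  imports Main
begin

text \<open>Letters are natural numbers (a countably infinite alphabet); words are lists
of letters. Identities are pairs of words; semigroup identities involve nonempty words.\<close>

type_synonym word = "nat list"
type_synonym identity = "word \<times> word"

fun eval_word :: "(nat \<Rightarrow> 'a::semigroup_mult) \<Rightarrow> word \<Rightarrow> 'a" where
  "eval_word \<phi> [x] = \<phi> x"
| "eval_word \<phi> (x # y # w) = \<phi> x * eval_word \<phi> (y # w)"
| "eval_word \<phi> [] = undefined"

definition satisfies :: "'a::semigroup_mult itself \<Rightarrow> identity \<Rightarrow> bool" where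
  "satisfies S uv \<longleftrightarrow> fst uv \<noteq> [] \<and> snd uv \<noteq> [] \<and>
     (\<forall>\<phi> :: nat \<Rightarrow> 'a. eval_word \<phi> (fst uv) = eval_word \<phi> (snd uv))"

definition occ :: "nat \<Rightarrow> word \<Rightarrow> nat" where
  "occ x w = count_list w x"

fun fp :: "word \<Rightarrow> word" where
  "fp [] = []"
| "fp (x # w) = (if x \<in> set w then fp w else x # fp w)"

text \<open>Applying an endomorphism of the free semigroup (letters to nonempty words).\<close>
definition subst :: "(nat \<Rightarrow> word) \<Rightarrow> word \<Rightarrow> word" where
  "subst \<phi> w = concat (map \<phi> w)"

definition deriv_step :: "identity set \<Rightarrow> word \<Rightarrow> word \<Rightarrow> bool" where
  "deriv_step \<Sigma> u v \<longleftrightarrow>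
     (\<exists>a b \<phi> p q. ((p, q) \<in> \<Sigma> \<or> (q, p) \<in> \<Sigma>) \<and> (\<forall>x. \<phi> x \<noteq> []) \<and>
        u = a @ subst \<phi> p @ b \<and> v = a @ subst \<phi> q @ b)"

definition derived :: "identity set \<Rightarrow> identity \<Rightarrow> bool" where
  "derived \<Sigma> uv \<longleftrightarrow> (deriv_step \<Sigma>)\<^sup>*\<^sup>* (fst uv) (snd uv)"

definition identity_basis :: "'a::semigroup_mult itself \<Rightarrow> identity set \<Rightarrow> bool" where
  "identity_basis S \<Sigma> \<longleftrightarrow> (\<forall>uv\<in>\<Sigma>. satisfies S uv) \<and>
     (\<forall>uv. satisfies S uv \<longrightarrow> derived \<Sigma> uv)"

definition finitely_based :: "'a::semigroup_mult itself \<Rightarrow> bool" where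
  "finitely_based S \<longleftrightarrow> (\<exists>\<Sigma>. finite \<Sigma> \<and> identity_basis S \<Sigma>)"

end

theory Submission
  imports Defs
begin

abbreviation "Sig \<equiv> {([0::nat, 1, 0], [1::nat, 0, 0])}"

definition NF :: "word \<Rightarrow> word" where
  "NF w = concat (map (\<lambda>y. replicate (occ y w) y) (fp w))"

lemma set_fp[simp]: "set (fp w) = set w"
  by (induction w) auto

lemma distinct_fp: "distinct (fp w)"
  by (induction w) auto

lemma step_cons: "deriv_step \<Sigma> u v \<Longrightarrow> deriv_step \<Sigma> (x#u) (x#v)"
  unfolding deriv_step_def by (metis append_Cons)

lemma rt_cons: "(deriv_step \<Sigma>)\<^sup>*\<^sup>* u v \<Longrightarrow> (deriv_step \<Sigma>)\<^sup>*\<^sup>* (x#u) (x#v)"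
  by (induction rule: rtranclp_induct) (auto intro: rtranclp.rtrancl_into_rtrancl step_cons)

lemma basic_step:
  assumes "A \<noteq> []"
  shows "deriv_step Sig ([x] @ A @ [x] @ b) (A @ [x,x] @ b)"
proof -
  define \<phi> where "\<phi> = (\<lambda>i::nat. if i = 1 then A else [x])"
  have ne: "\<forall>i. \<phi> i \<noteq> []" using assms by (simp add: \<phi>_def)
  have 1: "subst \<phi> [0,1,0] = [x] @ A @ [x]" by (simp add: subst_def \<phi>_def)
  have 2: "subst \<phi> [1,0,0] = A @ [x,x]" by (simp add: subst_def \<phi>_def)
  show ?thesis unfolding deriv_step_def
    apply (rule exI[of _ "[]"], rule exI[of _ b], rule exI[of _ \<phi>],
           rule exI[of _ "[0,1,0]"], rule exI[of _ "[1,0,0]"])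
    using ne 1 2 by simp
qed

lemma occ_cons: "occ y (x#w) = (if y = x then Suc (occ y w) else occ y w)"
  by (simp add: occ_def)

lemma main: "(deriv_step Sig)\<^sup>*\<^sup>* w (NF w)"
proof (induction w)
  case Nil
  then show ?case by (simp add: NF_def)
next
  case (Cons x w)
  have IH: "(deriv_step Sig)\<^sup>*\<^sup>* (x#w) (x # NF w)" using rt_cons[OF Cons.IH] .
  show ?case
  proof (cases "x \<in> set w")
    case False
    have M: "map (\<lambda>y. replicate (occ y (x#w)) y) (fp w) = map (\<lambda>y. replicate (occ y w) y) (fp w)"
      using False by (auto simp: occ_cons)
    have "occ x (x#w) = 1" using False by (simp add: occ_def)
    then have "NF (x#w) = x # NF w" using False by (simp add: NF_def M[symmetric])
    then show ?thesis using IH by simp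
  next
    case True
    then have "x \<in> set (fp w)" by simp
    then obtain P Q where PQ: "fp w = P @ x # Q" by (meson split_list)
    with distinct_fp[of w] have nP: "x \<notin> set P" and nQ: "x \<notin> set Q" by auto
    define f where "f = (\<lambda>y. replicate (occ y w) y)"
    define g where "g = (\<lambda>y. replicate (occ y (x#w)) y)"
    have fP: "map g P = map f P" using nP by (auto simp: f_def g_def occ_cons)
    have fQ: "map g Q = map f Q" using nQ by (auto simp: f_def g_def occ_cons)
    have pos: "occ x w > 0" using True unfolding occ_def by (metis count_list_0_iff gr0I)
    then obtain n where n: "occ x w = Suc n" using not0_implies_Suc by blast
    define A where "A = concat (map f P)"
    define B where "B = concat (map f Q)"
    have NFw: "NF w = A @ [x] @ replicate n x @ B"
      by (simp add: NF_def PQ A_def B_def f_def n)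
    have gx: "g x = [x,x] @ replicate n x" by (simp add: g_def occ_cons n)
    have "NF (x#w) = concat (map g (fp (x#w)))" by (simp add: NF_def g_def)
    also have "... = concat (map g P) @ g x @ concat (map g Q)" using True PQ by simp
    also have "... = A @ [x,x] @ replicate n x @ B" unfolding A_def B_def gx fP fQ by simp
    finally have NFxw: "NF (x#w) = A @ [x,x] @ replicate n x @ B" .
    have "(deriv_step Sig)\<^sup>*\<^sup>* (x # NF w) (NF (x#w))"
    proof (cases "A = []")
      case True
      then show ?thesis using NFw NFxw by simp
    next
      case False
      have "deriv_step Sig ([x] @ A @ [x] @ (replicate n x @ B)) (A @ [x,x] @ (replicate n x @ B))"
        using basic_step[OF False] .
      then show ?thesis using NFw NFxw by simp
    qed
    then show ?thesis using IH by simp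
  qed
qed

lemma step_sym: "deriv_step \<Sigma> u v \<Longrightarrow> deriv_step \<Sigma> v u"
  unfolding deriv_step_def by blast

lemma rt_sym: "(deriv_step \<Sigma>)\<^sup>*\<^sup>* u v \<Longrightarrow> (deriv_step \<Sigma>)\<^sup>*\<^sup>* v u"
  by (induction rule: rtranclp_induct) (auto intro: converse_rtranclp_into_rtranclp step_sym)

theorem theorem3p1:
  fixes S :: "'a::semigroup_mult itself"
  assumes "satisfies S ([0, 1, 0], [1, 0, 0])"
    and "\<And>u v. satisfies S (u, v) \<Longrightarrow> (\<forall>x. occ x u = occ x v)"
    and "\<And>u v. satisfies S (u, v) \<Longrightarrow> fp u = fp v"
  shows "identity_basis S {([0, 1, 0], [1, 0, 0])} \<and> finitely_based S"
proof -
  have der: "derived Sig uv" if "satisfies S uv" for uv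
  proof -
    obtain u v where uv: "uv = (u, v)" by fastforce
    have s: "satisfies S (u, v)" using that uv by simp
    have "NF u = NF v" unfolding NF_def using assms(2)[OF s] assms(3)[OF s] by simp
    then have "(deriv_step Sig)\<^sup>*\<^sup>* u v"
      using main[of u] rt_sym[OF main[of v]] by (metis rtranclp_trans)
    then show ?thesis using uv by (simp add: derived_def)
  qed
  have ib: "identity_basis S Sig"
    unfolding identity_basis_def using assms(1) der by blast
  then show ?thesis unfolding finitely_based_def by blast
qed

end
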